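(* In the multi-period newsvendor setting described in the context, suppose the demands are independent with $X_t\sim\mathrm{Pois}(\lambda_t)$ for $t\in\{1,\dots,T\}$. Then for every fixed $\boldsymbol q\in\mathbb N_0^T$, the expected cost $C_{\boldsymbol\lambda}(\boldsymbol q)$ is convex in $\lambda_t$ for each $t=1,\dots,T$.
   Context: There are $T$ periods; $q_t\in\mathbb N_0$ is the order delivered at the start of period $t$, $X_t$ the demand in period $t$. Inventory: $I_t=\sum_{k=1}^t(q_k-X_k)$, $I_t^+=\max\{I_t,0\}$, $I_t^-=\max\{-I_t,0\}$. Nonnegative constants: holding cost $h$, backorder cost $b$, price $p$; unit ordering costs $w_t$. The expected cost under rates $\boldsymbol\lambda$ is $$C_{\boldsymbol\lambda}(\boldsymbol q)=p\,\mathbb E_{\boldsymbol\lambda}[I_T^-]+\sum_{t=1}^T\Big(h\,\mathbb E_{\boldsymbol\lambda}[I_t^+]+b\,\mathbb E_{\boldsymbol\lambda}[I_t^-]+w_tq_t-p\,\mathbb E_{\boldsymbol\lambda}[X_t]\Big).$$ *)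

theory Defs
  imports "HOL-Probability.Probability"
begin

text \<open>Joint law of the independent demands X_1, ..., X_T with X_t ~ Pois(lam t).
  A demand path is a function nat => nat; outside {1..T} it is 0.\<close>
definition demand_pmf :: "nat \<Rightarrow> (nat \<Rightarrow> real) \<Rightarrow> (nat \<Rightarrow> nat) pmf" where
  "demand_pmf T lam = Pi_pmf {1..T} 0 (\<lambda>t. poisson_pmf (lam t))"

definition inv_level :: "(nat \<Rightarrow> nat) \<Rightarrow> (nat \<Rightarrow> nat) \<Rightarrow> nat \<Rightarrow> real" where
  "inv_level q X t = (\<Sum>k=1..t. real (q k) - real (X k))"

definition pos_part :: "real \<Rightarrow> real" where "pos_part x = max x 0"
definition neg_part :: "real \<Rightarrow> real" where "neg_part x = max (- x) 0"

definition exp_cost ::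
  "nat \<Rightarrow> real \<Rightarrow> real \<Rightarrow> real \<Rightarrow> (nat \<Rightarrow> real) \<Rightarrow> (nat \<Rightarrow> real) \<Rightarrow> (nat \<Rightarrow> nat) \<Rightarrow> real" where
  "exp_cost T h b p w lam q =
     (let M = demand_pmf T lam in
      p * measure_pmf.expectation M (\<lambda>X. neg_part (inv_level q X T))
      + (\<Sum>t=1..T. h * measure_pmf.expectation M (\<lambda>X. pos_part (inv_level q X t))
                  + b * measure_pmf.expectation M (\<lambda>X. neg_part (inv_level q X t))
                  + w t * real (q t)
                  - p * measure_pmf.expectation M (\<lambda>X. real (X t))))"

end

theory Submission
  imports Defs
begin


definition S :: "(nat \<Rightarrow> real) \<Rightarrow> real \<Rightarrow> real" where
  "S g x = (\<Sum>n. g n / fact n * x ^ n)"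
definition psi :: "(nat \<Rightarrow> real) \<Rightarrow> real \<Rightarrow> real" where
  "psi g x = exp (- x) * S g x"
definition dlt :: "(nat \<Rightarrow> real) \<Rightarrow> nat \<Rightarrow> real" where
  "dlt g n = g (Suc n) - g n"

lemma bnd_summable:
  fixes x :: real
  assumes "\<And>n. \<bar>g n\<bar> \<le> B"
  shows "summable (\<lambda>n. g n / fact n * x ^ n)"
proof (rule summable_comparison_test[of _ "\<lambda>n. B * (\<bar>x\<bar> ^ n / fact n)"])
  show "\<exists>N. \<forall>n\<ge>N. norm (g n / fact n * x ^ n) \<le> B * (\<bar>x\<bar> ^ n / fact n)"
  proof (intro exI allI impI)
    fix n
    have "norm (g n / fact n * x ^ n) = \<bar>g n\<bar> * (\<bar>x\<bar> ^ n / fact n)"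
      by (simp add: abs_mult power_abs)
    also have "\<dots> \<le> B * (\<bar>x\<bar> ^ n / fact n)"
      using assms by (intro mult_right_mono) auto
    finally show "norm (g n / fact n * x ^ n) \<le> B * (\<bar>x\<bar> ^ n / fact n)" .
  qed
  show "summable (\<lambda>n. B * (\<bar>x\<bar> ^ n / fact n))"
    using exp_converges[of "\<bar>x\<bar>"] by (intro summable_mult) (simp add: sums_iff divide_inverse mult.commute)
qed

lemma S_deriv:
  assumes "\<And>n. \<bar>g n\<bar> \<le> B"
  shows "(S g has_real_derivative S (\<lambda>n. g (Suc n)) x) (at x)"
proof -
  have d: "((\<lambda>x. \<Sum>n. (\<lambda>n. g n / fact n) n * x^n) has_field_derivative (\<Sum>n. diffs (\<lambda>n. g n / fact n) n * x^n)) (at x)"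
    by (rule termdiffs_strong_converges_everywhere) (use bnd_summable[OF assms] in auto)
  have "diffs (\<lambda>n. g n / fact n) n = g (Suc n) / fact n" for n
    by (simp add: diffs_def fact_Suc del: of_nat_Suc)
  hence e: "(\<Sum>n. diffs (\<lambda>n. g n / fact n) n * x^n) = S (\<lambda>n. g (Suc n)) x"
    by (simp add: S_def)
  have f: "S g = (\<lambda>x. \<Sum>n. (\<lambda>n. g n / fact n) n * x^n)"
    by (rule ext) (simp add: S_def)
  show ?thesis using d unfolding e f .
qed

lemma dlt_bnd:
  assumes "\<And>n. \<bar>g n\<bar> \<le> B"
  shows "\<bar>dlt g n\<bar> \<le> 2 * B"
  using assms[of n] assms[of "Suc n"] unfolding dlt_def by linarith

lemma psi_deriv:
  assumes "\<And>n. \<bar>g n\<bar> \<le> B"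
  shows "(psi g has_real_derivative psi (dlt g) x) (at x)"
proof -
  have s1: "summable (\<lambda>n. g (Suc n) / fact n * x ^ n)"
    by (rule bnd_summable[of _ B]) (use assms in auto)
  have s2: "summable (\<lambda>n. g n / fact n * x ^ n)" by (rule bnd_summable[OF assms])
  have sd: "S (dlt g) x = S (\<lambda>n. g (Suc n)) x - S g x"
    unfolding S_def dlt_def using suminf_diff[OF s1 s2]
    by (simp add: diff_divide_distrib left_diff_distrib)
  have e: "((\<lambda>x. exp (- x)) has_real_derivative (exp (- x) * (- 1))) (at x)"
    by (auto intro!: derivative_eq_intros)
  have "((\<lambda>x. exp (- x) * S g x) has_real_derivative
      (exp (- x) * (- 1)) * S g x + exp (- x) * S (\<lambda>n. g (Suc n)) x) (at x)"
    using DERIV_mult[OF e S_deriv[of g B x, OF assms]] by (simp add: mult.commute)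
  then show ?thesis unfolding psi_def sd
    by (simp add: algebra_simps)
qed

lemma psi_nonneg:
  assumes "\<And>n. \<bar>g n\<bar> \<le> B" "\<And>n. g n \<ge> 0" "x \<ge> 0"
  shows "psi g x \<ge> 0"
  unfolding psi_def S_def
  by (intro mult_nonneg_nonneg suminf_nonneg bnd_summable[OF assms(1)]) (use assms in auto)

lemma psi_convex:
  assumes "\<And>n. \<bar>g n\<bar> \<le> B" "\<And>n. dlt (dlt g) n \<ge> 0"
  shows "convex_on {0<..} (psi g)"
proof (rule convex_on_realI)
  show "connected {0::real<..}" by simp
  show "(psi g has_real_derivative psi (dlt g) x) (at x)" for x by (rule psi_deriv[OF assms(1)])
  fix x y :: real assume xy: "x \<in> {0<..}" "y \<in> {0<..}" "x \<le> y"
  have b1: "\<And>n. \<bar>dlt g n\<bar> \<le> 2 * B" by (rule dlt_bnd[OF assms(1)])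
  have b2: "\<And>n. \<bar>dlt (dlt g) n\<bar> \<le> 2 * (2 * B)" by (rule dlt_bnd[OF b1])
  show "psi (dlt g) x \<le> psi (dlt g) y"
  proof (rule DERIV_nonneg_imp_increasing_open[OF xy(3)])
    fix z assume "x < z" "z < y"
    then show "\<exists>d. (psi (dlt g) has_real_derivative d) (at z) \<and> d \<ge> 0"
      using xy by (intro exI[of _ "psi (dlt (dlt g)) z"] conjI psi_deriv[OF b1] psi_nonneg[OF b2 assms(2)]) auto
  next
    show "continuous_on {x..y} (psi (dlt g))"
      by (intro continuous_at_imp_continuous_on ballI DERIV_isCont[OF psi_deriv[OF b1]])
  qed
qed

lemma pois_expect:
  assumes "x > 0" "\<And>n. \<bar>g n\<bar> \<le> B"
  shows "measure_pmf.expectation (poisson_pmf x) g = psi g x"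
proof -
  have "measure_pmf.expectation (poisson_pmf x) g
     = integral\<^sup>L (count_space UNIV) (\<lambda>n. pmf (poisson_pmf x) n * g n)"
    unfolding measure_pmf_eq_density by (subst integral_density) auto
  also have "\<dots> = (\<Sum>n. pmf (poisson_pmf x) n * g n)"
  proof (rule integral_count_space_nat)
    have "summable (\<lambda>n. exp (-x) * (g n / fact n * x ^ n))"
      by (rule summable_mult) (rule bnd_summable[OF assms(2)])
    have "summable (\<lambda>n. exp (-x) * (\<bar>g n\<bar> / fact n * x ^ n))"
      using assms by (intro summable_mult bnd_summable[of _ B]) auto
    moreover have "norm (pmf (poisson_pmf x) n * g n) = exp (-x) * (\<bar>g n\<bar> / fact n * x ^ n)" for n
      using assms by (simp add: abs_mult field_simps)
    ultimately show "integrable (count_space UNIV) (\<lambda>n. pmf (poisson_pmf x) n * g n)"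
      by (simp add: integrable_count_space_nat_iff)
  qed
  also have "\<dots> = psi g x"
  proof -
    have "(\<Sum>n. pmf (poisson_pmf x) n * g n) = (\<Sum>n. exp (-x) * (g n / fact n * x ^ n))"
      using assms by (intro suminf_cong) (simp add: field_simps)
    also have "\<dots> = exp (-x) * S g x"
      unfolding S_def by (rule suminf_mult) (rule bnd_summable[OF assms(2)])
    finally show ?thesis by (simp add: psi_def)
  qed
  finally show ?thesis .
qed



lemma conv_cong:
  fixes C :: "real set"
  assumes "convex C" "\<And>x. x \<in> C \<Longrightarrow> f x = g x" "convex_on C g"
  shows "convex_on C f"
proof (rule convex_onI[OF _ assms(1)])
  fix t x y :: real assume h: "t > 0" "t < 1" "x \<in> C" "y \<in> C"
  have "(1 - t) *\<^sub>R x + t *\<^sub>R y \<in> C" using h by (intro convexD[OF assms(1)]) auto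
  then show "f ((1 - t) *\<^sub>R x + t *\<^sub>R y) \<le> (1 - t) * f x + t * f y"
    using convex_onD[OF assms(3), of t x y] h assms(2) by auto
qed

lemma conv_sum:
  assumes "convex C" "finite I" "\<And>i. i \<in> I \<Longrightarrow> convex_on C (f i)"
  shows "convex_on C (\<lambda>x. \<Sum>i\<in>I. f i x)"
  using assms(2,3)
proof (induction I rule: finite_induct)
  case empty then show ?case using assms(1) by (simp add: convex_on_const)
next
  case (insert i I) then show ?case by (simp add: convex_on_add)
qed

lemma conv_lin:
  assumes "convex (C::real set)"
  shows "convex_on C (\<lambda>x. d * x + c)"
  by (rule convex_onI[OF _ assms]) (simp add: algebra_simps)

lemma conv_lam:
  assumes "convex (C::real set)"
  shows "convex_on C (\<lambda>x. d * (lam(t := x)) k + c)"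
proof (cases "k = t")
  case True then show ?thesis using conv_lin[OF assms, of d c] by simp
next
  case False then show ?thesis using assms by (simp add: convex_on_const)
qed

lemma pair_exp:
  fixes G :: "'a \<times> 'b \<Rightarrow> real"
  assumes "\<And>z. 0 \<le> G z" "\<And>z. G z \<le> B"
  shows "measure_pmf.expectation (pair_pmf P Q) G =
    measure_pmf.expectation P (\<lambda>a. measure_pmf.expectation Q (\<lambda>b. G (a, b)))"
proof -
  have "measure_pmf.expectation (pair_pmf P Q) G = enn2real (\<integral>\<^sup>+z. ennreal (G z) \<partial>pair_pmf P Q)"
    using assms by (intro integral_eq_nn_integral) auto
  also have "\<dots> = enn2real (\<integral>\<^sup>+a. \<integral>\<^sup>+b. ennreal (G (a, b)) \<partial>Q \<partial>P)"
    by (simp add: nn_integral_pair_pmf')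
  also have "(\<lambda>a. \<integral>\<^sup>+b. ennreal (G (a, b)) \<partial>Q) = (\<lambda>a. ennreal (measure_pmf.expectation Q (\<lambda>b. G (a, b))))"
  proof
    fix a
    show "(\<integral>\<^sup>+b. ennreal (G (a, b)) \<partial>Q) = ennreal (measure_pmf.expectation Q (\<lambda>b. G (a, b)))"
      using assms
      by (intro nn_integral_eq_integral measure_pmf.integrable_const_bound[where B=B]) auto
  qed
  also have "enn2real (\<integral>\<^sup>+a. ennreal (measure_pmf.expectation Q (\<lambda>b. G (a, b))) \<partial>P)
     = measure_pmf.expectation P (\<lambda>a. measure_pmf.expectation Q (\<lambda>b. G (a, b)))"
    using assms by (intro enn2real_nn_integral_eq_integral) (auto intro!: integral_nonneg_AE)
  finally show ?thesis .
qed

lemma split_exp: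
  fixes F :: "(nat \<Rightarrow> nat) \<Rightarrow> real"
  assumes "finite A" "t \<notin> A" "\<And>f. 0 \<le> F f" "\<And>f. F f \<le> B"
  shows "measure_pmf.expectation (Pi_pmf (insert t A) 0 p) F =
    measure_pmf.expectation (p t) (\<lambda>y. measure_pmf.expectation (Pi_pmf A 0 p) (\<lambda>f. F (f(t := y))))"
proof -
  have "measure_pmf.expectation (Pi_pmf (insert t A) 0 p) F =
     measure_pmf.expectation (pair_pmf (p t) (Pi_pmf A 0 p)) (\<lambda>z. F ((snd z)(t := fst z)))"
    by (simp add: Pi_pmf_insert[OF assms(1,2)] case_prod_beta)
  also have "measure_pmf.expectation (pair_pmf (p t) (Pi_pmf A 0 p)) (\<lambda>z. F ((snd z)(t := fst z)))
     = measure_pmf.expectation (p t) (\<lambda>y. measure_pmf.expectation (Pi_pmf A 0 p) (\<lambda>f. F (f(t := y))))"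
    using pair_exp[of "\<lambda>z. F ((snd z)(t := fst z))" B] assms by simp
  finally show ?thesis .
qed



lemma pois_mean:
  assumes "r > 0"
  shows "integrable (poisson_pmf r) (\<lambda>n. real n) \<and> measure_pmf.expectation (poisson_pmf r) (\<lambda>n. real n) = r"
proof -
  let ?f = "\<lambda>n. pmf (poisson_pmf r) n * real n"
  have e: "(\<lambda>n. r * (r ^ n / fact n)) sums (r * exp r)"
    using sums_mult[OF exp_converges[of r], of r] by (simp add: divide_inverse mult.commute)
  have g: "(\<lambda>n. real n * (r ^ n / fact n)) sums (r * exp r)"
  proof -
    have "(\<lambda>n. real (Suc n) * (r ^ (Suc n) / fact (Suc n))) = (\<lambda>n. r * (r ^ n / fact n))"
      by (rule ext) (simp add: fact_Suc field_simps del: of_nat_Suc)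
    with e have "(\<lambda>n. real (Suc n) * (r ^ (Suc n) / fact (Suc n))) sums (r * exp r)" by simp
    then show ?thesis by (subst (asm) sums_Suc_iff) simp
  qed
  have s: "?f sums r"
  proof -
    have "(\<lambda>n. exp (-r) * (real n * (r ^ n / fact n))) sums (exp (-r) * (r * exp r))"
      by (rule sums_mult[OF g])
    moreover have "exp (-r) * (r * exp r) = r" by (simp add: exp_minus field_simps)
    ultimately show ?thesis using assms by (simp add: field_simps)
  qed
  have int: "integrable (count_space UNIV) ?f"
  proof -
    have "summable ?f" using s by (simp add: sums_iff)
    moreover have "norm (?f n) = ?f n" for n using assms by simp
    ultimately show ?thesis by (simp add: integrable_count_space_nat_iff)
  qed
  have "integrable (poisson_pmf r) (\<lambda>n. real n)"
    unfolding measure_pmf_eq_density using int by (subst integrable_density) auto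
  moreover have "measure_pmf.expectation (poisson_pmf r) (\<lambda>n. real n) = r"
    unfolding measure_pmf_eq_density using int s
    by (subst integral_density) (auto simp: integral_count_space_nat sums_iff)
  ultimately show ?thesis by blast
qed

lemma X_exp:
  assumes "\<forall>s\<in>{1..T}. L s > 0" "k \<in> {1..T}"
  shows "integrable (demand_pmf T L) (\<lambda>X. real (X k)) \<and>
         measure_pmf.expectation (demand_pmf T L) (\<lambda>X. real (X k)) = L k"
proof -
  have m: "map_pmf (\<lambda>f. f k) (demand_pmf T L) = poisson_pmf (L k)"
    unfolding demand_pmf_def using assms(2) by (subst Pi_pmf_component) auto
  have "integrable (map_pmf (\<lambda>f. f k) (demand_pmf T L)) real"
    unfolding m using pois_mean[of "L k"] assms by auto
  moreover have "measure_pmf.expectation (map_pmf (\<lambda>f. f k) (demand_pmf T L)) real = L k"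
    unfolding m using pois_mean[of "L k"] assms by auto
  ultimately show ?thesis by simp
qed

lemma X_int:
  assumes "\<forall>s\<in>{1..T}. L s > 0" "k \<in> {1..T}"
  shows "integrable (demand_pmf T L) (\<lambda>X. real (q k) - real (X k))"
  using X_exp[OF assms] by (intro Bochner_Integration.integrable_diff) auto

lemma I_int:
  assumes "\<forall>s\<in>{1..T}. L s > 0" "s \<le> T"
  shows "integrable (demand_pmf T L) (\<lambda>X. inv_level q X s)"
  unfolding inv_level_def
  by (rule Bochner_Integration.integrable_sum, rule X_int[OF assms(1)]) (use assms(2) in auto)

lemma I_exp:
  assumes "\<forall>s\<in>{1..T}. L s > 0" "s \<le> T"
  shows "measure_pmf.expectation (demand_pmf T L) (\<lambda>X. inv_level q X s) = (\<Sum>k=1..s. real (q k) - L k)"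
proof -
  have "measure_pmf.expectation (demand_pmf T L) (\<lambda>X. inv_level q X s) =
    (\<Sum>k=1..s. measure_pmf.expectation (demand_pmf T L) (\<lambda>X. real (q k) - real (X k)))"
    unfolding inv_level_def
    by (rule Bochner_Integration.integral_sum, rule X_int[OF assms(1)]) (use assms(2) in auto)
  also have "\<dots> = (\<Sum>k=1..s. real (q k) - L k)"
  proof (rule sum.cong)
    fix k assume "k \<in> {1..s}"
    then have k: "k \<in> {1..T}" using assms(2) by auto
    then show "measure_pmf.expectation (demand_pmf T L) (\<lambda>X. real (q k) - real (X k)) = real (q k) - L k"
      using X_exp[OF assms(1) k] by (subst Bochner_Integration.integral_diff) auto
  qed simp
  finally show ?thesis .
qed

lemma pos_bnd: "0 \<le> pos_part (inv_level q X s) \<and> pos_part (inv_level q X s) \<le> (\<Sum>k=1..s. real (q k))"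
proof -
  have "inv_level q X s \<le> (\<Sum>k=1..s. real (q k))"
    unfolding inv_level_def by (intro sum_mono) auto
  moreover have "0 \<le> (\<Sum>k=1..s. real (q k))" by (intro sum_nonneg) auto
  ultimately show ?thesis by (simp add: pos_part_def)
qed

lemma pos_int: "integrable (measure_pmf M) (\<lambda>X. pos_part (inv_level q X s))"
  using pos_bnd[of q _ s]
  by (intro measure_pmf.integrable_const_bound[where B="\<Sum>k=1..s. real (q k)"]) auto



lemma neg_exp:
  assumes "\<forall>s\<in>{1..T}. L s > 0" "s \<le> T"
  shows "measure_pmf.expectation (demand_pmf T L) (\<lambda>X. neg_part (inv_level q X s)) =
    measure_pmf.expectation (demand_pmf T L) (\<lambda>X. pos_part (inv_level q X s))
    + (\<Sum>k=1..s. 1 * L k + - real (q k))"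
proof -
  have "(\<lambda>X. neg_part (inv_level q X s)) = (\<lambda>X. pos_part (inv_level q X s) - inv_level q X s)"
    by (auto simp: pos_part_def neg_part_def)
  then have "measure_pmf.expectation (demand_pmf T L) (\<lambda>X. neg_part (inv_level q X s)) =
    measure_pmf.expectation (demand_pmf T L) (\<lambda>X. pos_part (inv_level q X s))
    - measure_pmf.expectation (demand_pmf T L) (\<lambda>X. inv_level q X s)"
    using I_int[OF assms] pos_int by (simp add: Bochner_Integration.integral_diff)
  also have "\<dots> = measure_pmf.expectation (demand_pmf T L) (\<lambda>X. pos_part (inv_level q X s))
    + (\<Sum>k=1..s. 1 * L k + - real (q k))"
    unfolding I_exp[OF assms] by (simp add: sum_subtractf sum_negf)
  finally show ?thesis .
qed

lemma inv_upd:
  "inv_level q (f(t := y)) s = inv_level q (f(t := 0)) s - (if t \<in> {1..s} then real y else 0)"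
proof -
  have "inv_level q (f(t := y)) s = (\<Sum>k=1..s. (real (q k) - real ((f(t := 0)) k)) - (if k = t then real y else 0))"
    unfolding inv_level_def by (intro sum.cong) auto
  then show ?thesis unfolding inv_level_def by (simp add: sum_subtractf)
qed

lemma pos_conv: "0 \<le> pos_part (a - (y + 2)) + pos_part (a - y) - 2 * pos_part (a - (y + 1))"
  unfolding pos_part_def max_def by auto

lemma P_convex:
  assumes "t \<in> {1..T}" "\<forall>s\<in>{1..T}. lam s > 0"
  shows "convex_on {0<..} (\<lambda>x. measure_pmf.expectation (demand_pmf T (lam(t := x))) (\<lambda>X. pos_part (inv_level q X s)))"
proof -
  define B where "B = (\<Sum>k=1..s. real (q k))"
  define R where "R = Pi_pmf ({1..T} - {t}) 0 (\<lambda>k. poisson_pmf (lam k))"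
  define \<phi> where "\<phi> f y = pos_part (inv_level q (f(t := y)) s)" for f y
  define G where "G y = measure_pmf.expectation R (\<lambda>f. \<phi> f y)" for y
  have phb: "0 \<le> \<phi> f y \<and> \<phi> f y \<le> B" for f y unfolding \<phi>_def B_def by (rule pos_bnd)
  have phi_int: "integrable R (\<lambda>f. \<phi> f y)" for y
    using phb by (intro measure_pmf.integrable_const_bound[where B=B]) auto
  have Gb: "\<bar>G y\<bar> \<le> B" for y
  proof -
    have "0 \<le> G y" unfolding G_def using phb by (intro integral_nonneg_AE) auto
    moreover have "G y \<le> B" unfolding G_def using phb
      by (intro measure_pmf.integral_le_const phi_int) auto
    ultimately show ?thesis by simp
  qed
  have Gc: "dlt (dlt G) n \<ge> 0" for n
  proof -
    have pw: "0 \<le> \<phi> f (Suc (Suc n)) + \<phi> f n - 2 * \<phi> f (Suc n)" for f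
    proof -
      define a where "a = inv_level q (f(t := 0)) s"
      have e: "\<And>y. inv_level q (f(t := y)) s = a - (if t \<in> {1..s} then real y else 0)"
        unfolding a_def by (rule inv_upd)
      show ?thesis
      proof (cases "t \<in> {1..s}")
        case True
        then show ?thesis unfolding \<phi>_def e
          using pos_conv[of a "real n"] by (simp add: add.commute)
      next
        case False
        then have e0: "\<And>y. inv_level q (f(t := y)) s = a" using e by (simp only: if_False)
        show ?thesis unfolding \<phi>_def e0 by simp
      qed
    qed
    have "0 \<le> measure_pmf.expectation R (\<lambda>f. \<phi> f (Suc (Suc n)) + \<phi> f n - 2 * \<phi> f (Suc n))"
      using pw by (intro integral_nonneg_AE) auto
    also have "\<dots> = G (Suc (Suc n)) + G n - 2 * G (Suc n)"
      unfolding G_def using phi_int by (simp add: Bochner_Integration.integral_diff Bochner_Integration.integral_add)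
    finally show ?thesis by (simp add: dlt_def)
  qed
  have eq: "measure_pmf.expectation (demand_pmf T (lam(t := x))) (\<lambda>X. pos_part (inv_level q X s)) = psi G x"
    if x: "x \<in> {0<..}" for x
  proof -
    have ins: "insert t ({1..T} - {t}) = {1..T}" using assms(1) by auto
    define pp where "pp k = poisson_pmf ((lam(t := x)) k)" for k
    have R: "Pi_pmf ({1..T} - {t}) 0 pp = R"
      unfolding R_def pp_def by (rule Pi_pmf_cong) auto
    have sp: "measure_pmf.expectation (Pi_pmf (insert t ({1..T} - {t})) 0 pp) (\<lambda>X. pos_part (inv_level q X s))
      = measure_pmf.expectation (pp t) (\<lambda>y. measure_pmf.expectation (Pi_pmf ({1..T} - {t}) 0 pp)
           (\<lambda>f. pos_part (inv_level q (f(t := y)) s)))"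
      by (rule split_exp[where B=B]) (use pos_bnd[of q _ s] in \<open>auto simp: B_def\<close>)
    have "measure_pmf.expectation (demand_pmf T (lam(t := x))) (\<lambda>X. pos_part (inv_level q X s))
       = measure_pmf.expectation (poisson_pmf x) G"
    proof -
      have dm: "demand_pmf T (lam(t := x)) = Pi_pmf {1..T} 0 pp"
        unfolding demand_pmf_def pp_def by simp
      have pt: "pp t = poisson_pmf x" by (simp add: pp_def)
      show ?thesis using sp unfolding ins R dm pt G_def \<phi>_def .
    qed
    also have "\<dots> = psi G x" using x Gb by (intro pois_expect) auto
    finally show ?thesis .
  qed
  show ?thesis
    by (rule conv_cong[OF _ eq psi_convex[OF Gb Gc]]) (auto intro: convex_real_interval)
qed


theorem theorem5p3:
  fixes T :: nat and h b p :: real and w :: "nat \<Rightarrow> real"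
    and lam :: "nat \<Rightarrow> real" and q :: "nat \<Rightarrow> nat"
  assumes "h \<ge> 0" and "b \<ge> 0" and "p \<ge> 0"
    and "\<forall>s\<in>{1..T}. lam s > 0"
  shows "\<forall>t\<in>{1..T}. convex_on {0<..} (\<lambda>x. exp_cost T h b p w (lam(t := x)) q)"
proof
  fix t assume t: "t \<in> {1..T}"
  define P where "P s x = measure_pmf.expectation (demand_pmf T (lam(t := x))) (\<lambda>X. pos_part (inv_level q X s))" for s x
  have Pc: "convex_on {0<..} (P s)" for s
    unfolding P_def[abs_def] using P_convex[OF t assms(4)] by simp
  have cvx: "convex {0::real<..}" by (rule convex_real_interval)
  define F where "F x = p * (P T x + (\<Sum>k=1..T. 1 * (lam(t := x)) k + - real (q k)))
      + (\<Sum>s=1..T. h * P s x + b * (P s x + (\<Sum>k=1..s. 1 * (lam(t := x)) k + - real (q k)))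
          + (0 * (lam(t := x)) s + w s * real (q s)) + ((- p) * (lam(t := x)) s + 0))" for x
  have eq: "exp_cost T h b p w (lam(t := x)) q = F x" if x: "x \<in> {0<..}" for x
  proof -
    have pos: "\<forall>s\<in>{1..T}. (lam(t := x)) s > 0" using assms(4) x by auto
    have ng: "measure_pmf.expectation (demand_pmf T (lam(t := x))) (\<lambda>X. neg_part (inv_level q X s))
       = P s x + (\<Sum>k=1..s. 1 * (lam(t := x)) k + - real (q k))" if "s \<le> T" for s
      unfolding P_def by (rule neg_exp[OF pos that])
    have xe: "measure_pmf.expectation (demand_pmf T (lam(t := x))) (\<lambda>X. real (X s)) = (lam(t := x)) s"
      if "s \<in> {1..T}" for s
      using X_exp[OF pos that] by blast
    show ?thesis
      unfolding exp_cost_def Let_def F_def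
      apply (subst ng, simp)
      apply (rule arg_cong2[where f="(+)"], simp add: P_def)
      apply (rule sum.cong, simp)
      apply (subst ng, simp)
      apply (subst xe, simp)
      apply (simp add: P_def)
      done
  qed
  have "convex_on {0<..} F"
    unfolding F_def
  proof (intro conv_lam[OF cvx] conv_sum[OF cvx] convex_on_add convex_on_cmul assms(1-3) Pc finite_atLeastAtMost)
  qed
  then show "convex_on {0<..} (\<lambda>x. exp_cost T h b p w (lam(t := x)) q)"
    by (rule conv_cong[OF cvx eq, rotated]) 
qed


end
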